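(* Let $(V,o)$ be a normal surface singularity of degree two (i.e. $Z^2=-2$) with $p_f(V,o)>0$, where $Z$ is the fundamental cycle on the minimal resolution. Assume that $Z$ is essentially irreducible and $D_m=Z_{min}$, where $D_m$ is the smallest term of the Yau sequence for $Z$ and $m$ its length. Then, with $p=p_f(V,o)$ and $Y$ the Yau cycle, $$p_a(V,o)=p_a\Big(\big(\big[\tfrac{p-1}{2}\big]+1\big)Y\Big)=m\Big(p-1-\big[\tfrac{p-1}{2}\big]\Big)\big[\tfrac{p+1}{2}\big]+1=\big[\tfrac{p^2}{4}\big]m+1 .$$
   Context: $[a]=\max\{n\in\mathbb Z\mid n\le a\}$. Let $\pi\colon X\to V$ be the minimal resolution and $\pi^{-1}(o)=\bigcup_{i=1}^n E_i$ the irreducible components of the exceptional set. A cycle is $D=\sum d_iE_i$, $d_i\in\mathbb Z$; $D_1\le D_2$ is coefficientwise, $D_1<D_2$ means $D_1\le D_2$, $D_1\ne D_2$. $K$ is the canonical divisor of $X$; for a cycle $D>0$, $p_a(D)=1+\frac12(D^2+D\cdot K)$. The fundamental cycle $Z$ is the smallest cycle $D>0$ with support $\pi^{-1}(o)$ and $D\cdot E_i\le 0$ for all $i$; $p_f(V,o)=p_a(Z)$; degree is $-Z^2$; $p_a(V,o)=\max\{p_a(D)\mid D>0\text{ a cycle}\}$. "$\mathcal O_D(-C)$ numerically trivial" means $C\cdot E=0$ for every component $E\le D$. $Z_{min}$ is the unique minimal cycle $0<Z_{min}\le Z$ with $p_a(Z_{min})=p_a(Z)$. Yau sequence: for a cycle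 $D$ that is the fundamental cycle on its support with $Z_{min}\le D$, $p_a(D)=p_f(V,o)$ and $D\cdot E=0$ for all components $E\le Z_{min}$, its Tyurina component is the unique maximal cycle $0<D'<D$ with $\mathcal O_{D'}(-D)$ numerically trivial and $p_a(D')=p_a(D)$. Set $D_1=Z$, $D_{i+1}=$ Tyurina component of $D_i$ as long as $D_i\cdot E=0$ for all components $E\le Z_{min}$, stopping at the first $D_m$ with $D_m\cdot Z_{min}<0$. Then $0<D_m<\dots<D_1=Z$ is the Yau sequence, $m$ its length, $Y=\sum_{i=1}^m D_i$ the Yau cycle. A $(-2)$-curve is a smooth rational exceptional curve $E$ with $E^2=-2$. $Z$ is essentially irreducible if there is a component $A\le Z$ which is not a $(-2)$-curve such that, with $k$ the coefficient of $A$ in $Z$, either $Z=kA$ or all components of $Z-kA$ are $(-2)$-curves. *)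

theory Defs
  imports Main "HOL-Library.Function_Algebras"
begin

text \<open>Numerical model of the minimal resolution of a normal surface singularity.
  Components of the exceptional set are the elements of a finite type 'e.
  M i j = E_i . E_j (intersection matrix), g i = arithmetic genus p_a(E_i).
  By adjunction K . E_i = 2 g_i - 2 - E_i^2.  Cycles are functions 'e => int.\<close>

definition unitc :: "'e \<Rightarrow> 'e \<Rightarrow> int" where
  "unitc i = (\<lambda>j. if j = i then 1 else 0)"

definition inter :: "('e::finite \<Rightarrow> 'e \<Rightarrow> int) \<Rightarrow> ('e \<Rightarrow> int) \<Rightarrow> ('e \<Rightarrow> int) \<Rightarrow> int" where
  "inter M D1 D2 = (\<Sum>i\<in>UNIV. \<Sum>j\<in>UNIV. D1 i * D2 j * M i j)"

definition canon :: "('e::finite \<Rightarrow> 'e \<Rightarrow> int) \<Rightarrow> ('e \<Rightarrow> int) \<Rightarrow> ('e \<Rightarrow> int) \<Rightarrow> int" where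
  "canon M g D = (\<Sum>i\<in>UNIV. D i * (2 * g i - 2 - M i i))"

text \<open>p_a(D) = 1 + (D^2 + K.D)/2; D^2 + K.D is always even, so div 2 is exact.\<close>
definition pa :: "('e::finite \<Rightarrow> 'e \<Rightarrow> int) \<Rightarrow> ('e \<Rightarrow> int) \<Rightarrow> ('e \<Rightarrow> int) \<Rightarrow> int" where
  "pa M g D = 1 + (inter M D D + canon M g D) div 2"

definition supp :: "('e \<Rightarrow> int) \<Rightarrow> 'e set" where
  "supp D = {i. D i \<noteq> 0}"

text \<open>Standing assumptions: the data of the minimal resolution of a normal surface
  singularity (symmetric, nonnegative off-diagonal, negative definite, connected
  exceptional set, no smooth rational (-1)-curve).\<close>
definition resolution_data :: "('e::finite \<Rightarrow> 'e \<Rightarrow> int) \<Rightarrow> ('e \<Rightarrow> int) \<Rightarrow> bool" where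
  "resolution_data M g \<longleftrightarrow>
     (\<forall>i j. M i j = M j i) \<and>
     (\<forall>i j. i \<noteq> j \<longrightarrow> M i j \<ge> 0) \<and>
     (\<forall>D. D \<noteq> 0 \<longrightarrow> inter M D D < 0) \<and>
     (\<forall>i j. (\<lambda>a b. a \<noteq> b \<and> M a b > 0)\<^sup>*\<^sup>* i j) \<and>
     (\<forall>i. g i \<ge> 0) \<and>
     (\<forall>i. \<not> (g i = 0 \<and> M i i = -1))"

definition minus_two_curve :: "('e \<Rightarrow> 'e \<Rightarrow> int) \<Rightarrow> ('e \<Rightarrow> int) \<Rightarrow> 'e \<Rightarrow> bool" where
  "minus_two_curve M g i \<longleftrightarrow> g i = 0 \<and> M i i = -2"

definition fund_cand :: "('e::finite \<Rightarrow> 'e \<Rightarrow> int) \<Rightarrow> 'e set \<Rightarrow> ('e \<Rightarrow> int) \<Rightarrow> bool" where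
  "fund_cand M S D \<longleftrightarrow> 0 < D \<and> supp D = S \<and> (\<forall>i\<in>S. inter M D (unitc i) \<le> 0)"

definition fund_cycle_on :: "('e::finite \<Rightarrow> 'e \<Rightarrow> int) \<Rightarrow> 'e set \<Rightarrow> ('e \<Rightarrow> int) \<Rightarrow> bool" where
  "fund_cycle_on M S D \<longleftrightarrow> fund_cand M S D \<and> (\<forall>D'. fund_cand M S D' \<longrightarrow> D \<le> D')"

definition is_Zmin :: "('e::finite \<Rightarrow> 'e \<Rightarrow> int) \<Rightarrow> ('e \<Rightarrow> int) \<Rightarrow> ('e \<Rightarrow> int) \<Rightarrow> ('e \<Rightarrow> int) \<Rightarrow> bool" where
  "is_Zmin M g Z X \<longleftrightarrow> 0 < X \<and> X \<le> Z \<and> pa M g X = pa M g Z \<and>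
     (\<forall>X'. 0 < X' \<and> X' \<le> Z \<and> pa M g X' = pa M g Z \<longrightarrow> X \<le> X')"

text \<open>A component E is "\<le> D" iff its coefficient in D is at least 1.\<close>
definition tyurina_cand :: "('e::finite \<Rightarrow> 'e \<Rightarrow> int) \<Rightarrow> ('e \<Rightarrow> int) \<Rightarrow> ('e \<Rightarrow> int) \<Rightarrow> ('e \<Rightarrow> int) \<Rightarrow> bool" where
  "tyurina_cand M g D D' \<longleftrightarrow> 0 < D' \<and> D' < D \<and>
     (\<forall>E. D' E \<ge> 1 \<longrightarrow> inter M D (unitc E) = 0) \<and> pa M g D' = pa M g D"

definition tyurina :: "('e::finite \<Rightarrow> 'e \<Rightarrow> int) \<Rightarrow> ('e \<Rightarrow> int) \<Rightarrow> ('e \<Rightarrow> int) \<Rightarrow> ('e \<Rightarrow> int) \<Rightarrow> bool" where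
  "tyurina M g D D' \<longleftrightarrow> tyurina_cand M g D D' \<and> (\<forall>D''. tyurina_cand M g D D'' \<longrightarrow> D'' \<le> D')"

definition yau_seq :: "('e::finite \<Rightarrow> 'e \<Rightarrow> int) \<Rightarrow> ('e \<Rightarrow> int) \<Rightarrow> ('e \<Rightarrow> int) \<Rightarrow> ('e \<Rightarrow> int) \<Rightarrow> ('e \<Rightarrow> int) list \<Rightarrow> bool" where
  "yau_seq M g Z Zm Ds \<longleftrightarrow> Ds \<noteq> [] \<and> hd Ds = Z \<and>
     (\<forall>i. Suc i < length Ds \<longrightarrow>
        (\<forall>E. Zm E \<ge> 1 \<longrightarrow> inter M (Ds ! i) (unitc E) = 0) \<and> tyurina M g (Ds ! i) (Ds ! Suc i)) \<and>
     inter M (last Ds) Zm < 0"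

definition ess_irreducible :: "('e::finite \<Rightarrow> 'e \<Rightarrow> int) \<Rightarrow> ('e \<Rightarrow> int) \<Rightarrow> ('e \<Rightarrow> int) \<Rightarrow> bool" where
  "ess_irreducible M g Z \<longleftrightarrow> (\<exists>A. Z A \<ge> 1 \<and> \<not> minus_two_curve M g A \<and>
     (let k = Z A; R = Z - (\<lambda>j. k * unitc A j) in
       R = 0 \<or> (\<forall>E\<in>supp R. minus_two_curve M g E)))"

definition pa_sing :: "('e::finite \<Rightarrow> 'e \<Rightarrow> int) \<Rightarrow> ('e \<Rightarrow> int) \<Rightarrow> int" where
  "pa_sing M g = (GREATEST x. \<exists>D. 0 < D \<and> x = pa M g D)"

end

theory Submission
  imports Defs
begin


lemma inter_unitc_right: "inter M X (unitc j) = (\<Sum>i\<in>UNIV. X i * M i j)"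
  unfolding inter_def
proof (rule sum.cong[OF refl])
  fix i
  have "(\<Sum>ja\<in>UNIV. X i * unitc j ja * M i ja) = (\<Sum>ja\<in>UNIV. (if ja = j then X i * M i ja else 0))"
    by (rule sum.cong) (auto simp: unitc_def)
  also have "\<dots> = X i * M i j" by simp
  finally show "(\<Sum>ja\<in>UNIV. X i * unitc j ja * M i ja) = X i * M i j" .
qed

lemma inter_expand: "inter M X W = (\<Sum>j\<in>UNIV. W j * inter M X (unitc j))"
  unfolding inter_unitc_right
  unfolding inter_def
  by (subst sum.swap) (simp add: sum_distrib_left mult_ac)

lemma inter_sym:
  assumes "\<forall>i j. M i j = M j i"
  shows "inter M X W = inter M W X"
  unfolding inter_def
  by (subst sum.swap) (simp add: assms mult_ac)

lemma inter_add_left: "inter M (X + W) V = inter M X V + inter M W V"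
  unfolding inter_def by (simp add: algebra_simps sum.distrib)

lemma inter_add_right: "inter M V (X + W) = inter M V X + inter M V W"
  unfolding inter_def by (simp add: algebra_simps sum.distrib)

lemma inter_diff_left: "inter M (X - W) V = inter M X V - inter M W V"
  unfolding inter_def by (simp add: algebra_simps sum_subtractf)

lemma inter_diff_right: "inter M V (X - W) = inter M V X - inter M V W"
  unfolding inter_def by (simp add: algebra_simps sum_subtractf)

lemma inter_scale_left: "inter M (\<lambda>i. n * X i) V = n * inter M X V"
  unfolding inter_def by (simp add: algebra_simps sum_distrib_left)

lemma inter_scale_right: "inter M V (\<lambda>i. n * X i) = n * inter M V X"
  unfolding inter_def by (simp add: algebra_simps sum_distrib_left)

lemma inter_zero_left[simp]: "inter M 0 V = 0"
  unfolding inter_def by simp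

lemma inter_zero_right[simp]: "inter M V 0 = 0"
  unfolding inter_def by simp

lemma inter_sum_list_left: "inter M (sum_list Xs) V = (\<Sum>X\<leftarrow>Xs. inter M X V)"
  proof (induction Xs)
  case Nil then show ?case by (simp add: zero_fun_def[symmetric])
next
  case (Cons a Xs) then show ?case by (simp only: sum_list.Cons inter_add_left list.map)
qed

lemma inter_sum_list_right: "inter M V (sum_list Xs) = (\<Sum>X\<leftarrow>Xs. inter M V X)"
  proof (induction Xs)
  case Nil then show ?case by (simp add: zero_fun_def[symmetric])
next
  case (Cons a Xs) then show ?case by (simp only: sum_list.Cons inter_add_right list.map)
qed

lemma inter_units: "inter M (unitc i) (unitc j) = M i j"
proof -
  have "inter M (unitc i) (unitc j) = (\<Sum>k\<in>UNIV. (if k = i then M k j else 0))"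
    unfolding inter_unitc_right by (rule sum.cong) (auto simp: unitc_def)
  also have "\<dots> = M i j" by simp
  finally show ?thesis .
qed

lemma canon_expand: "canon M g D = (\<Sum>i\<in>UNIV. D i * (2 * g i - 2 - M i i))"
  by (simp add: canon_def)

lemma canon_add: "canon M g (X + W) = canon M g X + canon M g W"
  unfolding canon_def by (simp add: distrib_right sum.distrib)

lemma canon_diff: "canon M g (X - W) = canon M g X - canon M g W"
  unfolding canon_def by (simp add: left_diff_distrib sum_subtractf)

lemma canon_scale: "canon M g (\<lambda>i. n * X i) = n * canon M g X"
  unfolding canon_def by (simp add: algebra_simps sum_distrib_left)

lemma canon_unitc: "canon M g (unitc j) = 2 * g j - 2 - M j j"
proof -
  have "canon M g (unitc j) = (\<Sum>k\<in>UNIV. (if k = j then 2 * g k - 2 - M k k else 0))"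
    unfolding canon_def by (rule sum.cong) (auto simp: unitc_def)
  also have "\<dots> = 2 * g j - 2 - M j j" by simp
  finally show ?thesis .
qed

lemma unitc_apply: "unitc i j = (if j = i then 1 else 0)"
  by (simp add: unitc_def)

lemma ipr_nonneg_outside:
  assumes "\<forall>i j. i \<noteq> j \<longrightarrow> M i j \<ge> 0" and "X \<ge> 0" and "X E = 0"
  shows "inter M X (unitc E) \<ge> 0"
  unfolding inter_unitc_right
proof (rule sum_nonneg)
  fix i show "0 \<le> X i * M i E"
    using assms by (cases "i = E") (auto simp: le_fun_def)
qed

lemma ipr_ge_term:
  assumes "\<forall>i j. i \<noteq> j \<longrightarrow> M i j \<ge> 0" and "X \<ge> 0" and "X E = 0"
  shows "inter M X (unitc E) \<ge> X F * M F E"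
proof -
  have "inter M X (unitc E) = (\<Sum>i\<in>UNIV. X i * M i E)" by (rule inter_unitc_right)
  also have "\<dots> \<ge> (\<Sum>i\<in>{F}. X i * M i E)"
  proof (rule sum_mono2)
    fix b assume "b \<in> UNIV - {F}"
    show "0 \<le> X b * M b E"
      using assms by (cases "b = E") (auto simp: le_fun_def)
  qed auto
  finally show ?thesis by simp
qed



definition FF :: "('e::finite \<Rightarrow> 'e \<Rightarrow> int) \<Rightarrow> ('e \<Rightarrow> int) \<Rightarrow> ('e \<Rightarrow> int) \<Rightarrow> int" where
  "FF M g D = inter M D D + canon M g D"

lemma FF_add:
  assumes "\<forall>i j. M i j = M j i"
  shows "FF M g (X + W) = FF M g X + FF M g W + 2 * inter M X W"
  using inter_sym[OF assms, of W X]
  unfolding FF_def by (simp add: inter_add_left inter_add_right canon_add)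

lemma FF_diff:
  assumes "\<forall>i j. M i j = M j i"
  shows "FF M g (X - W) = FF M g X - FF M g W - 2 * inter M (X - W) W"
proof -
  have "FF M g X = FF M g ((X - W) + W)" by simp
  also have "\<dots> = FF M g (X - W) + FF M g W + 2 * inter M (X - W) W"
    by (rule FF_add[OF assms])
  finally show ?thesis by simp
qed

lemma FF_scale_unit: "FF M g (\<lambda>j. n * unitc x j) = M x x * (n * n - n) + 2 * n * (g x - 1)"
  unfolding FF_def by (simp add: inter_scale_left inter_scale_right canon_scale inter_units canon_unitc algebra_simps)

lemma FF_even_aux:
  assumes "\<forall>i j. M i j = M j i" and "finite S"
  shows "even (FF M g (\<lambda>j. if j \<in> S then D j else 0))"
  using assms(2)
proof (induction S rule: finite_induct)
  case empty
  then show ?case by (simp add: FF_def zero_fun_def[symmetric] canon_def)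
next
  case (insert x S)
  have eq: "(\<lambda>j. if j \<in> insert x S then D j else 0) = (\<lambda>j. if j \<in> S then D j else 0) + (\<lambda>j. D x * unitc x j)"
    using insert(2) by (auto simp: unitc_def fun_eq_iff)
  have ev: "even (D x * D x - D x)" by simp
  show ?case unfolding eq FF_add[OF assms(1)] FF_scale_unit
    using insert(3) ev by simp
qed

lemma FF_even:
  assumes "\<forall>i j. M i j = M j i"
  shows "even (FF M g D)"
  using FF_even_aux[OF assms, where S=UNIV and D=D and g=g] by simp

lemma pa_FF: "pa M g D = 1 + FF M g D div 2"
  by (simp add: pa_def FF_def)

lemma FF_pa:
  assumes "\<forall>i j. M i j = M j i"
  shows "FF M g D = 2 * pa M g D - 2"
  using FF_even[OF assms, of g D] by (simp add: pa_FF)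

lemma pos_fun_iff: "(0 < (U::'a \<Rightarrow> int)) \<longleftrightarrow> (\<forall>i. U i \<ge> 0) \<and> (\<exists>i. U i \<noteq> 0)"
  by (auto simp: less_le le_fun_def fun_eq_iff)

lemma pos_of: "(U::'a \<Rightarrow> int) \<ge> 0 \<Longrightarrow> U a \<ge> 1 \<Longrightarrow> 0 < U"
  unfolding pos_fun_iff le_fun_def by (auto simp: zero_fun_def) (metis not_one_le_zero)

lemma nonneg_apply: "(U::'a \<Rightarrow> int) \<ge> 0 \<Longrightarrow> U a \<ge> 0"
  by (auto simp: le_fun_def)

lemma sum_unitc: "(\<Sum>i\<in>(UNIV::'e::finite set). unitc E i) = 1"
proof -
  have "(\<Sum>i\<in>(UNIV::'e set). unitc E i) = (\<Sum>i\<in>UNIV. if i = E then 1 else 0)"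
    by (rule sum.cong) (auto simp: unitc_def)
  also have "\<dots> = 1" by simp
  finally show ?thesis .
qed



locale S =
  fixes M :: "'e::finite \<Rightarrow> 'e \<Rightarrow> int" and g :: "'e \<Rightarrow> int"
    and Z Zm :: "'e \<Rightarrow> int" and Ds :: "('e \<Rightarrow> int) list" and A :: 'e
  assumes res: "resolution_data M g"
    and fund: "fund_cycle_on M UNIV Z"
    and Z2: "inter M Z Z = -2"
    and ppos: "pa M g Z > 0"
    and A_Z: "Z A \<ge> 1" and A_not: "\<not> minus_two_curve M g A"
    and others: "\<And>E. E \<noteq> A \<Longrightarrow> minus_two_curve M g E"
    and zmin: "is_Zmin M g Z Zm"
    and yau: "yau_seq M g Z Zm Ds"
    and lastZ: "last Ds = Zm"
begin

abbreviation ip where "ip X E \<equiv> inter M X (unitc E)"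
abbreviation F where "F \<equiv> FF M g"
abbreviation p where "p \<equiv> pa M g Z"
abbreviation k where "k \<equiv> Z A"
definition c where "c = 2 * g A - 2 - M A A"

lemma sym: "\<forall>i j. M i j = M j i" using res by (simp add: resolution_data_def)
lemma offd: "\<forall>i j. i \<noteq> j \<longrightarrow> M i j \<ge> 0" using res by (simp add: resolution_data_def)
lemma negdef: "D \<noteq> 0 \<Longrightarrow> inter M D D < 0" using res by (simp add: resolution_data_def)
lemma conn: "(\<lambda>a b. a \<noteq> b \<and> M a b > 0)\<^sup>*\<^sup>* i j" using res by (simp add: resolution_data_def)
lemma g_nonneg: "g i \<ge> 0" using res by (simp add: resolution_data_def)

lemma Z_ge1: "Z i \<ge> 1"
proof -
  have "fund_cand M UNIV Z" using fund by (simp add: fund_cycle_on_def)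
  then have "0 < Z" "supp Z = UNIV" by (auto simp: fund_cand_def)
  then have "Z i \<ge> 0" "Z i \<noteq> 0" by (auto simp: pos_fun_iff supp_def)
  then show ?thesis by simp
qed

lemma Z_nef: "ip Z E \<le> 0"
  using fund by (simp add: fund_cycle_on_def fund_cand_def)

lemma Z_least: "fund_cand M UNIV D \<Longrightarrow> Z \<le> D"
  using fund by (simp add: fund_cycle_on_def)

lemma m2: "E \<noteq> A \<Longrightarrow> g E = 0 \<and> M E E = -2"
  using others[of E] by (simp add: minus_two_curve_def)

lemma canon_A: "canon M g D = D A * c"
proof -
  have "canon M g D = (\<Sum>i\<in>UNIV. if i = A then D A * c else 0)"
    unfolding canon_def by (rule sum.cong) (auto simp: c_def dest: m2)
  then show ?thesis by simp
qed

lemma F_def2: "F D = inter M D D + D A * c"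
  by (simp add: FF_def canon_A)

lemma F_unit: "F (unitc E) = 2 * g E - 2"
  by (simp add: FF_def inter_units canon_unitc)

lemma F_unit_m2: "E \<noteq> A \<Longrightarrow> F (unitc E) = -2"
  using m2 by (simp add: F_unit)

lemma Fadd: "F (X + W) = F X + F W + 2 * inter M X W"
  by (rule FF_add[OF sym])

lemma Fdiff: "F (X - W) = F X - F W - 2 * inter M (X - W) W"
  by (rule FF_diff[OF sym])

lemma Fpa: "F D = 2 * pa M g D - 2"
  by (rule FF_pa[OF sym])

lemma FZ: "F Z = 2 * p - 2" by (rule Fpa)

lemma kc: "k * c = 2 * p"
  using FZ Z2 by (simp add: F_def2)

lemma isym: "inter M X W = inter M W X" by (rule inter_sym[OF sym])

lemma ip_out: "X \<ge> 0 \<Longrightarrow> X E = 0 \<Longrightarrow> ip X E \<ge> 0"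
  by (rule ipr_nonneg_outside[OF offd])

lemma ip_term: "X \<ge> 0 \<Longrightarrow> X E = 0 \<Longrightarrow> ip X E \<ge> X G * M G E"
  by (rule ipr_ge_term[OF offd])

lemma nef_support:
  assumes "U \<ge> 0" "U i0 \<noteq> 0" "\<And>E. ip U E \<le> 0"
  shows "U j \<ge> 1"
proof -
  have "(\<lambda>a b. a \<noteq> b \<and> M a b > 0)\<^sup>*\<^sup>* i0 j" by (rule conn)
  then have "U j \<noteq> 0"
  proof (induction rule: rtranclp_induct)
    case base then show ?case using assms by simp
  next
    case (step y z)
    show ?case
    proof
      assume z0: "U z = 0"
      have "ip U z \<ge> U y * M y z" using ip_term[OF assms(1) z0] .
      moreover have "U y > 0" using step assms(1) by (auto simp: le_fun_def less_le)
      ultimately have "ip U z > 0" using step(2) by (smt (verit) mult_pos_pos)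
      then show False using assms(3)[of z] by simp
    qed
  qed
  then show ?thesis using assms(1) by (auto simp: le_fun_def) (smt (verit))
qed

lemma ascent:
  assumes "0 < U" "U \<le> Z"
  shows "F U \<le> F Z"
  using assms
proof (induction "nat (\<Sum>i\<in>UNIV. Z i - U i)" arbitrary: U rule: less_induct)
  case less
  have U0: "U \<ge> 0" and Unz: "\<exists>i. U i \<noteq> 0" using less.prems(1) by (auto simp: pos_fun_iff le_fun_def)
  show ?case
  proof (cases "\<forall>E. ip U E \<le> 0")
    case True
    obtain i0 where i0: "U i0 \<noteq> 0" using Unz by blast
    have ge1: "\<And>j. U j \<ge> 1" using nef_support[OF U0 i0] True by blast
    have "fund_cand M UNIV U"
      unfolding fund_cand_def using less.prems(1) True ge1
      by (auto simp: supp_def) (smt (verit))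
    then have "Z \<le> U" by (rule Z_least)
    with less.prems(2) have "U = Z" by simp
    then show ?thesis by simp
  next
    case False
    then obtain E where E: "ip U E > 0" by (meson not_le)
    have lt: "U E < Z E"
    proof (rule ccontr)
      assume "\<not> U E < Z E"
      then have eq: "(Z - U) E = 0" using less.prems(2) by (simp add: le_fun_def) (smt (verit))
      have "Z - U \<ge> 0" using less.prems(2) by (simp add: le_fun_def)
      then have "ip (Z - U) E \<ge> 0" using ip_out eq by blast
      then have "ip U E \<le> ip Z E" by (simp add: inter_diff_left)
      then show False using E Z_nef[of E] by simp
    qed
    define U' where "U' = U + unitc E"
    have U'le: "U' \<le> Z" using less.prems(2) lt by (auto simp: U'_def le_fun_def unitc_def)
    have U'pos: "0 < U'" using U0 by (auto simp: U'_def pos_fun_iff unitc_def le_fun_def) (smt (verit))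
    have "(\<Sum>i\<in>UNIV. Z i - U' i) = (\<Sum>i\<in>UNIV. Z i - U i) - (\<Sum>i\<in>UNIV. unitc E i)"
      by (simp add: U'_def sum_subtractf[symmetric] algebra_simps)
    then have meas: "(\<Sum>i\<in>UNIV. Z i - U' i) = (\<Sum>i\<in>UNIV. Z i - U i) - 1" by (simp add: sum_unitc)
    have "(\<Sum>i\<in>UNIV. Z i - U' i) \<ge> 0" using U'le by (intro sum_nonneg) (auto simp: le_fun_def)
    then have "nat (\<Sum>i\<in>UNIV. Z i - U' i) < nat (\<Sum>i\<in>UNIV. Z i - U i)" using meas by simp
    then have IH: "F U' \<le> F Z" using less.hyps U'pos U'le by blast
    have "F U' = F U + F (unitc E) + 2 * ip U E" by (simp add: U'_def Fadd)
    moreover have "F (unitc E) \<ge> -2" using g_nonneg[of E] by (simp add: F_unit)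
    ultimately have "F U \<le> F U'" using E by simp
    with IH show ?thesis by simp
  qed
qed

end


context S begin

abbreviation m where "m \<equiv> length Ds"
abbreviation D where "D i \<equiv> Ds ! i"

lemma Ds_ne: "Ds \<noteq> []" using yau by (simp add: yau_seq_def)
lemma m_pos: "m \<ge> 1" using Ds_ne by (cases Ds) auto
lemma D0: "D 0 = Z" using yau Ds_ne by (cases Ds) (auto simp: yau_seq_def)
lemma Dlast: "D (m - 1) = Zm" using lastZ Ds_ne by (simp add: last_conv_nth)
lemma step_zm: "Suc i < m \<Longrightarrow> Zm E \<ge> 1 \<Longrightarrow> ip (D i) E = 0"
  using yau by (simp add: yau_seq_def)
lemma step_ty: "Suc i < m \<Longrightarrow> tyurina M g (D i) (D (Suc i))"
  using yau by (simp add: yau_seq_def)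
lemma step_cand: "Suc i < m \<Longrightarrow> tyurina_cand M g (D i) (D (Suc i))"
  using step_ty by (simp add: tyurina_def)
lemma step_max: "Suc i < m \<Longrightarrow> tyurina_cand M g (D i) X \<Longrightarrow> X \<le> D (Suc i)"
  using step_ty by (simp add: tyurina_def)
lemma supp_cond: "Suc i < m \<Longrightarrow> D (Suc i) E \<ge> 1 \<Longrightarrow> ip (D i) E = 0"
  using step_cand by (simp add: tyurina_cand_def)

lemma D_props: "i < m \<Longrightarrow> 0 < D i \<and> D i \<le> Z \<and> pa M g (D i) = p"
proof (induction i)
  case 0
  have "0 < Z" using fund by (simp add: fund_cycle_on_def fund_cand_def)
  then show ?case unfolding D0 by (intro conjI order_refl refl)
next
  case (Suc i)
  then have tc: "tyurina_cand M g (D i) (D (Suc i))" by (intro step_cand)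
  then have a: "0 < D (Suc i)" "D (Suc i) < D i" "pa M g (D (Suc i)) = pa M g (D i)"
    by (simp_all add: tyurina_cand_def)
  have "D i \<le> Z" "pa M g (D i) = p" using Suc by auto
  then show ?case
  proof (intro conjI)
    show "0 < D (Suc i)" by (rule a(1))
    show "D (Suc i) \<le> Z" using order_trans[OF less_imp_le[OF a(2)] \<open>D i \<le> Z\<close>] .
    show "pa M g (D (Suc i)) = p" using a(3) \<open>pa M g (D i) = p\<close> by simp
  qed
qed

lemma D_pos: "i < m \<Longrightarrow> 0 < D i" using D_props by blast
lemma D_leZ: "i < m \<Longrightarrow> D i \<le> Z" using D_props by blast
lemma D_pa: "i < m \<Longrightarrow> pa M g (D i) = p" using D_props by blast
lemma D_F: "i < m \<Longrightarrow> F (D i) = F Z" using D_pa by (simp add: Fpa)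
lemma D_nonneg: "i < m \<Longrightarrow> D i j \<ge> 0"
  using D_pos by (auto simp: pos_fun_iff)

lemma D_mono_Suc: "Suc i < m \<Longrightarrow> D (Suc i) \<le> D i"
  using step_cand by (simp add: tyurina_cand_def less_le)

lemma D_mono: "i \<le> j \<Longrightarrow> j < m \<Longrightarrow> D j \<le> D i"
proof (induction j rule: dec_induct)
  case base then show ?case by simp
next
  case (step j)
  then show ?case using D_mono_Suc[of j] by (meson Suc_lessD order_trans)
qed

lemma orth: "i < j \<Longrightarrow> j < m \<Longrightarrow> inter M (D i) (D j) = 0"
proof -
  assume ij: "i < j" "j < m"
  have "inter M (D i) (D j) = (\<Sum>E\<in>UNIV. D j E * ip (D i) E)" by (rule inter_expand)
  also have "\<dots> = 0"
  proof (rule sum.neutral, rule ballI)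
    fix E
    show "D j E * ip (D i) E = 0"
    proof (cases "D j E = 0")
      case False
      then have "D j E \<ge> 1" using D_nonneg[OF ij(2), of E] by simp
      moreover have "D j \<le> D (Suc i)" using ij by (intro D_mono) auto
      ultimately have "D (Suc i) E \<ge> 1" by (auto simp: le_fun_def) (smt (verit))
      then show ?thesis using supp_cond[of i E] ij by simp
    qed simp
  qed
  finally show ?thesis .
qed

lemma Zm_props: "0 < Zm \<and> Zm \<le> Z \<and> pa M g Zm = p"
  using zmin by (simp add: is_Zmin_def)

lemma Zm_least: "0 < X \<Longrightarrow> X \<le> Z \<Longrightarrow> pa M g X = p \<Longrightarrow> Zm \<le> X"
  using zmin by (simp add: is_Zmin_def)

lemma Zm_le_D: "i < m \<Longrightarrow> Zm \<le> D i"
  using D_props Zm_least by blast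

lemma p_ge1: "p \<ge> 1" using ppos by simp

lemma ZmA: "Zm A \<ge> 1"
proof (rule ccontr)
  assume "\<not> Zm A \<ge> 1"
  moreover have "Zm A \<ge> 0" using Zm_props by (auto simp: pos_fun_iff)
  ultimately have z: "Zm A = 0" by simp
  have "Zm \<noteq> 0" using Zm_props by auto
  then have "inter M Zm Zm < 0" by (rule negdef)
  moreover have "F Zm = F Z" using Zm_props by (simp add: Fpa)
  ultimately show False using z p_ge1 FZ by (simp add: F_def2)
qed

lemma DA: "i < m \<Longrightarrow> D i A \<ge> 1"
  using Zm_le_D ZmA by (auto simp: le_fun_def) (smt (verit))

lemma ipA: "Suc i < m \<Longrightarrow> ip (D i) A = 0"
  using step_zm ZmA by blast

lemma D_sq: "i < m \<Longrightarrow> inter M (D i) (D i) = c * (k - D i A) - 2"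
  using D_F[of i] FZ Z2 by (simp add: F_def2 algebra_simps)

lemma DA_le: "i < m \<Longrightarrow> D i A \<le> k"
  using D_leZ by (simp add: le_fun_def)

lemma k_ge1: "k \<ge> 1" using A_Z .

lemma c_pos: "c > 0"
proof -
  have "k * c > 0" using kc p_ge1 by simp
  then show ?thesis using k_ge1 by (simp add: zero_less_mult_iff)
qed

lemma F_minus_unit: "E \<noteq> A \<Longrightarrow> F (X - unitc E) = F X - 2 - 2 * ip X E"
  using F_unit_m2[of E] m2[of E] by (simp add: Fdiff inter_diff_left inter_units)

lemma F_plus_unit: "E \<noteq> A \<Longrightarrow> F (X + unitc E) = F X - 2 + 2 * ip X E"
  using F_unit_m2[of E] by (simp add: Fadd)

lemma alpha:
  assumes "i < m" "E \<noteq> A" "D i E \<ge> 1"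
  shows "ip (D i) E \<ge> -1"
proof (rule ccontr)
  assume neg: "\<not> ip (D i) E \<ge> -1"
  define X where "X = D i - unitc E"
  have "0 < X" using assms D_nonneg[OF assms(1)] DA[OF assms(1)]
    by (auto simp: X_def pos_fun_iff unitc_def) (smt (verit))+
  moreover have "X \<le> Z" using D_leZ[OF assms(1)] by (auto simp: X_def le_fun_def unitc_def) (smt (verit))
  ultimately have "F X \<le> F Z" by (rule ascent)
  moreover have "F X = F Z - 2 - 2 * ip (D i) E" using D_F[OF assms(1)] F_minus_unit[OF assms(2)] by (simp add: X_def)
  ultimately show False using neg by simp
qed

lemma beta:
  assumes "i < m" "E \<noteq> A" "D i E \<ge> 1"
  shows "ip (D i) E \<le> 0"
proof (cases i)
  case 0 then show ?thesis using Z_nef by (simp add: D0)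
next
  case (Suc j)
  have jm: "Suc j < m" using assms Suc by simp
  have Di: "D i = D (Suc j)" using Suc by simp
  show ?thesis
  proof (rule ccontr)
    assume pos: "\<not> ip (D i) E \<le> 0"
    have e0: "ip (D j) E = 0" using supp_cond[OF jm] assms(3) Di by simp
    define T where "T = D j - D (Suc j)"
    have T0: "T \<ge> 0" using D_mono_Suc[OF jm] by (simp add: T_def le_fun_def)
    have TE: "T E \<ge> 1"
    proof (rule ccontr)
      assume "\<not> T E \<ge> 1"
      then have "T E = 0" using T0 by (simp add: le_fun_def) (smt (verit))
      then have "ip T E \<ge> 0" using ip_out T0 by blast
      moreover have "ip (D j) E = ip (D (Suc j)) E + ip T E" by (simp add: T_def inter_diff_left)
      ultimately show False using e0 pos Di by simp
    qed
    define X where "X = D (Suc j) + unitc E"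
    have Xle: "X \<le> D j" using TE D_mono_Suc[OF jm] by (auto simp: X_def T_def le_fun_def unitc_def)
    have Xpos: "0 < X" using D_pos[OF jm] by (auto simp: X_def pos_fun_iff unitc_def le_fun_def) (smt (verit))
    have XZ: "X \<le> Z" using Xle D_leZ[of j] jm by (meson Suc_lessD order_trans)
    have FX: "F X = F Z - 2 + 2 * ip (D (Suc j)) E" using D_F[OF jm] F_plus_unit[OF assms(2)] by (simp add: X_def)
    have "F X \<le> F Z" using ascent Xpos XZ by blast
    then have ip1: "ip (D (Suc j)) E = 1" using FX pos Di by simp
    then have FXZ: "F X = F Z" using FX by simp
    have paX: "pa M g X = pa M g (D j)"
      using FXZ D_F[of j] jm Fpa[of X] Fpa[of "D j"] by simp
    have Xne: "X \<noteq> D j"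
    proof
      assume "X = D j"
      then have "ip X E = 0" using e0 by simp
      moreover have "ip X E = ip (D (Suc j)) E + M E E" by (simp add: X_def inter_add_left inter_units)
      ultimately show False using ip1 m2[OF assms(2)] by simp
    qed
    have "tyurina_cand M g (D j) X"
      unfolding tyurina_cand_def
    proof (intro conjI allI impI)
      show "0 < X" by (rule Xpos)
      show "X < D j" using Xle Xne by simp
      show "pa M g X = pa M g (D j)" by (rule paX)
    next
      fix E' assume "1 \<le> X E'"
      show "ip (D j) E' = 0"
      proof (cases "E' = E")
        case True then show ?thesis using e0 by simp
      next
        case False
        then have "D (Suc j) E' \<ge> 1" using \<open>1 \<le> X E'\<close> by (simp add: X_def unitc_def)
        then show ?thesis using supp_cond[OF jm] by simp
      qed
    qed
    then have "X \<le> D (Suc j)" using step_max[OF jm] by blast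
    then show False by (auto simp: X_def le_fun_def unitc_def dest: spec[of _ E])
  qed
qed

lemma factA:
  assumes jm: "Suc j < m" and EA: "E \<noteq> A" and "D j E \<ge> 1" and E0: "D (Suc j) E = 0" and e0: "ip (D j) E = 0"
  shows "ip (D (Suc j)) E \<le> 0"
proof (rule ccontr)
  assume pos: "\<not> ip (D (Suc j)) E \<le> 0"
  define X where "X = D (Suc j) + unitc E"
  have Xle: "X \<le> D j" using D_mono_Suc[OF jm] assms(3) E0
    by (auto simp: X_def le_fun_def unitc_def)
  have Xpos: "0 < X" using D_pos[OF jm] by (auto simp: X_def pos_fun_iff unitc_def le_fun_def) (smt (verit))
  have XZ: "X \<le> Z" using Xle D_leZ[of j] jm by (meson Suc_lessD order_trans)
  have FX: "F X = F Z - 2 + 2 * ip (D (Suc j)) E" using D_F[OF jm] F_plus_unit[OF EA] by (simp add: X_def)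
  have "F X \<le> F Z" using ascent Xpos XZ by blast
  then have ip1: "ip (D (Suc j)) E = 1" using FX pos by simp
  then have FXZ: "F X = F Z" using FX by simp
  have paX: "pa M g X = pa M g (D j)"
    using FXZ D_F[of j] jm Fpa[of X] Fpa[of "D j"] by simp
  have Xne: "X \<noteq> D j"
  proof
    assume "X = D j"
    then have "ip X E = 0" using e0 by simp
    moreover have "ip X E = ip (D (Suc j)) E + M E E" by (simp add: X_def inter_add_left inter_units)
    ultimately show False using ip1 m2[OF EA] by simp
  qed
  have "tyurina_cand M g (D j) X"
    unfolding tyurina_cand_def
  proof (intro conjI allI impI)
    show "0 < X" by (rule Xpos)
    show "X < D j" using Xle Xne by simp
    show "pa M g X = pa M g (D j)" by (rule paX)
  next
    fix E' assume "1 \<le> X E'"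
    show "ip (D j) E' = 0"
    proof (cases "E' = E")
      case True then show ?thesis using e0 by simp
    next
      case False
      then have "D (Suc j) E' \<ge> 1" using \<open>1 \<le> X E'\<close> by (simp add: X_def unitc_def)
      then show ?thesis using supp_cond[OF jm] by simp
    qed
  qed
  then have "X \<le> D (Suc j)" using step_max[OF jm] by blast
  then show False using E0 by (auto simp: X_def le_fun_def unitc_def dest: spec[of _ E])
qed

end


context S begin

lemma F_noA: "X A = 0 \<Longrightarrow> F X = inter M X X"
  by (simp add: F_def2)

lemma gamma:
  assumes jm: "Suc j < m" and EA: "E \<noteq> A" and E1: "D j E \<ge> 1" and E0: "D (Suc j) E = 0"
    and neg: "ip (D j) E < 0"
  shows "ip (D (Suc j)) E \<ge> 1"
proof (rule ccontr)
  assume "\<not> ?thesis"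
  then have nE: "ip (D (Suc j)) E \<le> 0" by simp
  have j: "j < m" using jm by simp
  define H where "H = {G. G \<noteq> A \<and> D j G \<ge> 1 \<and> D (Suc j) G = 0}"
  define chi :: "'e set \<Rightarrow> 'e \<Rightarrow> int" where "chi Q = (\<lambda>i. if i \<in> Q then 1 else 0)" for Q
  define QQ where "QQ = {Q. Q \<subseteq> H \<and> E \<in> Q \<and> inter M (chi Q) (chi Q) \<ge> -2}"
  have EH: "E \<in> H" using EA E1 E0 by (simp add: H_def)
  have chiE: "chi {E} = unitc E" by (auto simp: chi_def unitc_def fun_eq_iff)
  have "{E} \<in> QQ" using EH m2[OF EA] by (simp add: QQ_def chiE inter_units)
  then have QQne: "QQ \<noteq> {}" by blast
  have "finite QQ" by simp
  then obtain Q where Q: "Q \<in> QQ" and Qmax: "\<forall>Q'\<in>QQ. Q \<subseteq> Q' \<longrightarrow> Q = Q'"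
    using finite_has_maximal QQne by metis
  have QH: "Q \<subseteq> H" and EQ: "E \<in> Q" and Qsq: "inter M (chi Q) (chi Q) \<ge> -2"
    using Q by (auto simp: QQ_def)
  have AQ: "A \<notin> Q" using QH by (auto simp: H_def)
  have chi0: "chi Q \<ge> 0" by (auto simp: chi_def le_fun_def)
  have closed: "M G F' = 0" if GQ: "G \<in> Q" and F'H: "F' \<in> H" and F'Q: "F' \<notin> Q" for G F'
  proof -
    have cF': "chi Q F' = 0" using F'Q by (simp add: chi_def)
    have le0: "ip (chi Q) F' \<le> 0"
    proof (rule ccontr)
      assume "\<not> ip (chi Q) F' \<le> 0"
      then have ip1: "ip (chi Q) F' \<ge> 1" by simp
      have ins: "chi (insert F' Q) = chi Q + unitc F'"
        using F'Q by (auto simp: chi_def unitc_def fun_eq_iff)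
      have F'A: "F' \<noteq> A" using F'H by (simp add: H_def)
      have "inter M (chi (insert F' Q)) (chi (insert F' Q))
          = inter M (chi Q) (chi Q) + 2 * ip (chi Q) F' + M F' F'"
        unfolding ins by (simp add: inter_add_left inter_add_right inter_units isym[of "unitc F'" "chi Q"])
      then have "insert F' Q \<in> QQ" using ip1 Qsq m2[OF F'A] QH F'H EQ by (simp add: QQ_def)
      then have "Q = insert F' Q" using Qmax by blast
      then show False using F'Q by blast
    qed
    have "ip (chi Q) F' \<ge> chi Q G * M G F'" by (rule ip_term[OF chi0 cF'])
    moreover have "G \<noteq> F'" using GQ F'Q by blast
    then have "M G F' \<ge> 0" using offd by blast
    ultimately show ?thesis using le0 GQ by (simp add: chi_def)
  qed
  show False
  proof (cases "\<exists>F'\<in>Q. ip (D (Suc j)) F' \<ge> 1")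
    case True
    then obtain F' where F'Q: "F' \<in> Q" and F'1: "ip (D (Suc j)) F' \<ge> 1" by blast
    have F'E: "F' \<noteq> E" using F'1 nE by auto
    have F'H: "F' \<in> H" using F'Q QH by blast
    then have F'A: "F' \<noteq> A" and F'j: "D j F' \<ge> 1" and F'0: "D (Suc j) F' = 0" by (auto simp: H_def)
    have b: "ip (D j) F' \<le> 0" using beta[OF j F'A F'j] .
    have "ip (D j) F' \<noteq> 0" using factA[OF jm F'A F'j F'0] F'1 by auto
    with b have F'neg: "ip (D j) F' \<le> -1" by simp
    have Eneg: "ip (D j) E \<le> -1" using neg by simp
    have nonpos: "ip (D j) G \<le> 0" if "G \<in> Q" for G
    proof -
      have "G \<in> H" using that QH by blast
      then show ?thesis using beta[OF j] by (simp add: H_def)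
    qed
    have "inter M (D j) (chi Q) = (\<Sum>G\<in>UNIV. chi Q G * ip (D j) G)" by (rule inter_expand)
    also have "\<dots> = (\<Sum>G\<in>UNIV. if G \<in> Q then ip (D j) G else 0)"
      by (rule sum.cong) (auto simp: chi_def)
    also have "\<dots> = (\<Sum>G\<in>Q. ip (D j) G)"
      by (simp add: sum.If_cases Int_def)
    also have "\<dots> = (\<Sum>G\<in>Q - {E, F'}. ip (D j) G) + (\<Sum>G\<in>{E, F'}. ip (D j) G)"
      using EQ F'Q by (intro sum.subset_diff) auto
    also have "\<dots> \<le> 0 + (ip (D j) E + ip (D j) F')"
      using F'E nonpos by (intro add_mono sum_nonpos) auto
    finally have dq: "inter M (D j) (chi Q) \<le> -2" using F'neg Eneg by simp
    define X where "X = D j - chi Q"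
    have Xnn: "X \<ge> 0" using QH D_nonneg[OF j] by (auto simp: X_def chi_def le_fun_def H_def)
    have XA: "X A \<ge> 1" using AQ DA[OF j] by (simp add: X_def chi_def)
    have Xpos: "0 < X" using pos_of[OF Xnn XA] .
    have "X \<le> D j" using chi0 by (auto simp: X_def le_fun_def)
    then have XZ: "X \<le> Z" using D_leZ[OF j] by simp
    have Fchi: "F (chi Q) = inter M (chi Q) (chi Q)" using AQ by (intro F_noA) (simp add: chi_def)
    have "F X = F (D j) - F (chi Q) - 2 * inter M X (chi Q)" unfolding X_def by (rule Fdiff)
    also have "\<dots> = F Z + inter M (chi Q) (chi Q) - 2 * inter M (D j) (chi Q)"
      using D_F[OF j] Fchi by (simp add: X_def inter_diff_left)
    finally have "F X > F Z" using Qsq dq by simp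
    moreover have "F X \<le> F Z" using ascent[OF Xpos XZ] .
    ultimately show False by simp
  next
    case False
    then have allQ: "ip (D (Suc j)) G \<le> 0" if "G \<in> Q" for G using that by force
    define X where "X = (\<lambda>i. if i \<in> Q then D j i else 0)"
    define W where "W = D j - X"
    have Wnn: "W \<ge> 0" using D_nonneg[OF j] by (auto simp: W_def X_def le_fun_def)
    have WA: "W A \<ge> 1" using AQ DA[OF j] by (simp add: W_def X_def)
    have Wpos: "0 < W" using pos_of[OF Wnn WA] .
    have "W \<le> D j" using D_nonneg[OF j] by (auto simp: W_def X_def le_fun_def)
    then have WZ: "W \<le> Z" using D_leZ[OF j] by simp
    have ipW: "ip W G = 0" if GQ: "G \<in> Q" for G
    proof -
      have GH: "G \<in> H" using GQ QH by blast
      have "ip W G = (\<Sum>l\<in>UNIV. W l * M l G)" by (rule inter_unitc_right)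
      also have "\<dots> = 0"
      proof (rule sum.neutral, rule ballI)
        fix l
        show "W l * M l G = 0"
        proof (cases "W l = 0")
          case False
          then have lQ: "l \<notin> Q" and lj: "D j l \<ge> 1"
            using D_nonneg[OF j, of l] by (auto simp: W_def X_def split: if_splits)
          show ?thesis
          proof (cases "l \<in> H")
            case True
            then have "M G l = 0" using closed GQ lQ by blast
            then have "M l G = 0" using sym by metis
            then show ?thesis by simp
          next
            case False
            then have "l = A \<or> D (Suc j) l \<noteq> 0" using lj by (auto simp: H_def)
            then have l1: "D (Suc j) l \<ge> 1" using DA[OF jm] D_nonneg[OF jm, of l] by auto
            have G0: "D (Suc j) G = 0" using GH by (simp add: H_def)
            have "ip (D (Suc j)) G \<ge> D (Suc j) l * M l G"
              using ip_term G0 D_nonneg[OF jm] by (auto simp: le_fun_def)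
            moreover have "l \<noteq> G" using l1 G0 by auto
            then have "M l G \<ge> 0" using offd by blast
            ultimately have "M l G = 0" using allQ[OF GQ] l1
              by (smt (verit) mult_le_0_iff)
            then show ?thesis by simp
          qed
        qed simp
      qed
      finally show ?thesis .
    qed
    have WX: "inter M W X = 0"
    proof -
      have "inter M W X = (\<Sum>G\<in>UNIV. X G * ip W G)" by (rule inter_expand)
      also have "\<dots> = 0" by (rule sum.neutral) (auto simp: X_def ipW)
      finally show ?thesis .
    qed
    have XA: "X A = 0" using AQ by (simp add: X_def)
    have "X E \<noteq> 0" using EQ E1 by (simp add: X_def)
    then have "X \<noteq> 0" by (auto simp: zero_fun_def)
    then have FX: "F X < 0" using negdef F_noA[of X, OF XA] by simp
    have "D j = W + X" by (simp add: W_def)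
    then have "F (D j) = F W + F X + 2 * inter M W X" using Fadd by simp
    then have "F W > F Z" using D_F[OF j] WX FX by simp
    moreover have "F W \<le> F Z" using ascent[OF Wpos WZ] .
    ultimately show False by simp
  qed
qed

end


lemma sum_list_fun_apply: "(sum_list Xs :: 'a \<Rightarrow> int) x = sum_list (map (\<lambda>X. X x) Xs)"
  by (induction Xs) auto

context S begin

definition Yt where "Yt j = sum_list (drop j Ds)"

lemma Yt_Suc: "j < m \<Longrightarrow> Yt j = D j + Yt (Suc j)"
  unfolding Yt_def by (simp add: Cons_nth_drop_Suc[symmetric])

lemma Yt_m: "Yt m = 0" by (simp add: Yt_def)

lemma Yt_nonneg: "j \<le> m \<Longrightarrow> Yt j \<ge> 0"
proof (induction "m - j" arbitrary: j)
  case 0 then have "j = m" by simp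
  then show ?case by (simp add: Yt_m)
next
  case (Suc n)
  then have j: "j < m" by simp
  have "Yt (Suc j) \<ge> 0" using Suc by simp
  moreover have "D j \<ge> 0" using D_pos[OF j] by (simp add: less_le)
  ultimately show ?case using Yt_Suc[OF j] by (simp add: add_nonneg_nonneg)
qed

lemma Yt_zero_at: "j \<le> l \<Longrightarrow> l \<le> m \<Longrightarrow> (j < m \<Longrightarrow> D j E = 0) \<Longrightarrow> Yt l E = 0"
proof (induction "m - l" arbitrary: l)
  case 0 then have "l = m" by simp
  then show ?case by (simp add: Yt_m)
next
  case (Suc n)
  then have l: "l < m" by simp
  have "D l \<le> D j" using D_mono Suc.prems l by simp
  then have "D l E = 0" using Suc.prems l D_nonneg[OF l, of E] by (auto simp: le_fun_def) (smt (verit))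
  moreover have "Yt (Suc l) E = 0" using Suc by simp
  ultimately show ?case using Yt_Suc[OF l] by simp
qed

lemma orth_Yt: "j < l \<Longrightarrow> l \<le> m \<Longrightarrow> inter M (D j) (Yt l) = 0"
proof (induction "m - l" arbitrary: l)
  case 0 then have "l = m" by simp
  then show ?case by (simp add: Yt_m zero_fun_def[symmetric])
next
  case (Suc n)
  then have l: "l < m" by simp
  have "inter M (D j) (Yt l) = inter M (D j) (D l) + inter M (D j) (Yt (Suc l))"
    using Yt_Suc[OF l] by (simp add: inter_add_right)
  then show ?case using Suc orth[of j l] l by simp
qed

lemma Yt_sq: "j \<le> m \<Longrightarrow> inter M (Yt j) (Yt j) = (\<Sum>l\<in>{j..<m}. inter M (D l) (D l))"
proof (induction "m - j" arbitrary: j)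
  case 0 then have "j = m" by simp
  then show ?case by (simp add: Yt_m zero_fun_def[symmetric])
next
  case (Suc n)
  then have j: "j < m" by simp
  have c0: "inter M (D j) (Yt (Suc j)) = 0" using orth_Yt j by simp
  have "inter M (Yt j) (Yt j) = inter M (D j) (D j) + 2 * inter M (D j) (Yt (Suc j)) + inter M (Yt (Suc j)) (Yt (Suc j))"
    using Yt_Suc[OF j] by (simp add: inter_add_right inter_add_left isym[of "Yt (Suc j)" "D j"])
  also have "\<dots> = inter M (D j) (D j) + (\<Sum>l\<in>{Suc j..<m}. inter M (D l) (D l))"
    using c0 Suc j by simp
  also have "\<dots> = (\<Sum>l\<in>{j..<m}. inter M (D l) (D l))"
    using j by (simp add: sum.atLeast_Suc_lessThan)
  finally show ?case .
qed

lemma Yt_A: "j \<le> m \<Longrightarrow> Yt j A = (\<Sum>l\<in>{j..<m}. D l A)"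
proof (induction "m - j" arbitrary: j)
  case 0 then have "j = m" by simp
  then show ?case by (simp add: Yt_m)
next
  case (Suc n)
  then have j: "j < m" by simp
  then show ?case using Yt_Suc[OF j] Suc by (simp add: sum.atLeast_Suc_lessThan)
qed

lemma Zm_ip_nonneg:
  assumes "E \<noteq> A" "Zm E \<ge> 1"
  shows "ip Zm E \<ge> 0"
proof (rule ccontr)
  assume neg: "\<not> ip Zm E \<ge> 0"
  define X where "X = Zm - unitc E"
  have Zm0: "Zm \<ge> 0" using Zm_props by (simp add: less_le)
  have Xnn: "X \<ge> 0" using Zm0 assms by (auto simp: X_def le_fun_def unitc_def)
  have XA: "X A \<ge> 1" using ZmA assms by (simp add: X_def unitc_def)
  have Xpos: "0 < X" by (rule pos_of[OF Xnn XA])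
  have XZ: "X \<le> Z" using Zm_props by (auto simp: X_def le_fun_def unitc_def) (smt (verit))
  have FX: "F X = F Zm - 2 - 2 * ip Zm E" using F_minus_unit[OF assms(1)] by (simp add: X_def)
  have FZm: "F Zm = F Z" using Zm_props by (simp add: Fpa)
  have "F X \<le> F Z" using ascent[OF Xpos XZ] .
  then have "F X = F Z" using FX FZm neg by simp
  then have "pa M g X = p" using Fpa[of X] FZ by simp
  then have "Zm \<le> X" using Zm_least[OF Xpos XZ] by simp
  then show False using assms by (auto simp: X_def le_fun_def unitc_def dest: spec[of _ E])
qed

lemma C_main: "j < m \<Longrightarrow> E \<noteq> A \<Longrightarrow> D j E \<ge> 1 \<Longrightarrow> ip (Yt j) E = 0"
proof (induction "m - 1 - j" arbitrary: j E)
  case 0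
  then have jm: "j = m - 1" by simp
  have sj: "Suc j = m" using jm m_pos by simp
  have YZ: "Yt j = Zm" using Yt_Suc[of j] 0 jm Yt_m Dlast sj by simp
  have "ip Zm E \<le> 0" using beta[of j E] 0 jm Dlast by simp
  moreover have "ip Zm E \<ge> 0" using Zm_ip_nonneg 0 jm Dlast by simp
  ultimately show ?case using YZ by simp
next
  case (Suc n)
  then have jm: "Suc j < m" by simp
  have j: "j < m" using jm by simp
  have IH: "\<And>E. E \<noteq> A \<Longrightarrow> D (Suc j) E \<ge> 1 \<Longrightarrow> ip (Yt (Suc j)) E = 0"
    using Suc.hyps(1)[of "Suc j"] Suc.hyps(2) jm by simp
  define Y' where "Y' = Yt (Suc j)"
  define a where "a = D j A"
  define y' where "y' = ip Y' A"
  define s where "s = Y' A"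
  have Y'0: "Y' \<ge> 0" using Yt_nonneg jm by (simp add: Y'_def)
  have YtY': "Yt j = D j + Y'" using Yt_Suc[OF j] by (simp add: Y'_def)
  define t where "t E = D j E * ip (Yt j) E" for E
  have tA: "t A = a * y'"
    using ipA[OF jm] by (simp add: t_def a_def y'_def YtY' inter_add_left)
  have Y'zero: "Y' E = 0" if "D (Suc j) E = 0" for E
    unfolding Y'_def by (rule Yt_zero_at[of "Suc j"]) (use that jm in auto)
  have tnn: "t E \<ge> 0" if EA: "E \<noteq> A" for E
  proof (cases "D j E = 0")
    case True then show ?thesis by (simp add: t_def)
  next
    case False
    then have E1: "D j E \<ge> 1" using D_nonneg[OF j, of E] by simp
    show ?thesis
    proof (cases "D (Suc j) E \<ge> 1")
      case True
      then have "ip (Yt j) E = 0"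
        using supp_cond[OF jm True] IH[OF EA True] by (simp add: YtY' inter_add_left Y'_def)
      then show ?thesis by (simp add: t_def)
    next
      case False
      then have E0: "D (Suc j) E = 0" using D_nonneg[OF jm, of E] by simp
      have Y'E: "Y' E = 0" by (rule Y'zero[OF E0])
      have ipY': "ip Y' E \<ge> 0" using ip_out[OF Y'0 Y'E] .
      have "ip (Yt j) E \<ge> 0"
      proof (cases "ip (D j) E \<ge> 0")
        case True then show ?thesis using ipY' by (simp add: YtY' inter_add_left)
      next
        case False
        then have m1: "ip (D j) E = -1" using alpha[OF j EA E1] by simp
        have g1: "ip (D (Suc j)) E \<ge> 1" using gamma[OF jm EA E1 E0] m1 by simp
        have YY: "Y' = D (Suc j) + Yt (Suc (Suc j))" using Yt_Suc[OF jm] by (simp add: Y'_def)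
        have "Yt (Suc (Suc j)) \<ge> 0" using Yt_nonneg jm by simp
        moreover have "Yt (Suc (Suc j)) E = 0" using Y'E YY D_nonneg[OF jm, of E] E0 by simp
        ultimately have "ip (Yt (Suc (Suc j))) E \<ge> 0" using ip_out by blast
        then have "ip Y' E \<ge> 1" using g1 YY by (simp add: inter_add_left)
        then show ?thesis using m1 by (simp add: YtY' inter_add_left)
      qed
      then show ?thesis using E1 by (simp add: t_def)
    qed
  qed
  have tot: "(\<Sum>E\<in>UNIV. t E) = inter M (D j) (D j)"
  proof -
    have "(\<Sum>E\<in>UNIV. t E) = inter M (Yt j) (D j)" unfolding t_def by (rule inter_expand[symmetric])
    also have "\<dots> = inter M (D j) (D j) + inter M (D j) Y'"
      by (simp add: YtY' inter_add_left isym[of Y' "D j"])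
    also have "inter M (D j) Y' = 0" unfolding Y'_def using orth_Yt jm by simp
    finally show ?thesis by simp
  qed
  have split: "(\<Sum>E\<in>UNIV. t E) = t A + (\<Sum>E\<in>UNIV - {A}. t E)"
    by (simp add: sum.remove)
  have Y'sq1: "inter M Y' Y' = s * y'"
  proof -
    have "inter M Y' Y' = (\<Sum>E\<in>UNIV. Y' E * ip Y' E)" by (rule inter_expand)
    also have "\<dots> = Y' A * ip Y' A + (\<Sum>E\<in>UNIV - {A}. Y' E * ip Y' E)" by (simp add: sum.remove)
    also have "(\<Sum>E\<in>UNIV - {A}. Y' E * ip Y' E) = 0"
    proof (rule sum.neutral, rule ballI)
      fix E assume "E \<in> UNIV - {A}"
      then have EA: "E \<noteq> A" by simp
      show "Y' E * ip Y' E = 0"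
      proof (cases "D (Suc j) E \<ge> 1")
        case True then show ?thesis using IH[OF EA True] by (simp add: Y'_def)
      next
        case False then have "D (Suc j) E = 0" using D_nonneg[OF jm, of E] by simp
        then show ?thesis using Y'zero by simp
      qed
    qed
    finally show ?thesis by (simp add: s_def y'_def)
  qed
  have Y'sq2: "inter M Y' Y' = (\<Sum>l\<in>{Suc j..<m}. inter M (D l) (D l))"
    unfolding Y'_def using Yt_sq jm by simp
  have sdef: "s = (\<Sum>l\<in>{Suc j..<m}. D l A)"
    unfolding s_def Y'_def using Yt_A jm by simp
  have s1: "s \<ge> 1"
  proof -
    have "s = D (Suc j) A + (\<Sum>l\<in>{Suc (Suc j)..<m}. D l A)"
      using sdef jm by (simp add: sum.atLeast_Suc_lessThan)
    moreover have "(\<Sum>l\<in>{Suc (Suc j)..<m}. D l A) \<ge> 0"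
      by (rule sum_nonneg) (use D_nonneg in auto)
    ultimately show ?thesis using DA[OF jm] by simp
  qed
  have key: "s * inter M (D j) (D j) - a * inter M Y' Y' \<le> 0"
  proof -
    have "s * inter M (D j) (D j) - a * inter M Y' Y'
        = (\<Sum>l\<in>{Suc j..<m}. D l A * inter M (D j) (D j) - a * inter M (D l) (D l))"
      by (simp add: sdef Y'sq2 sum_distrib_left sum_distrib_right sum_subtractf)
    also have "\<dots> = (\<Sum>l\<in>{Suc j..<m}. (D l A - a) * (2 * p - 2))"
    proof (rule sum.cong[OF refl])
      fix l assume "l \<in> {Suc j..<m}"
      then have l: "l < m" by simp
      show "D l A * inter M (D j) (D j) - a * inter M (D l) (D l) = (D l A - a) * (2 * p - 2)"
      proof -
        have e1: "inter M (D l) (D l) = 2 * p - 2 - c * D l A" using D_sq[OF l] kc by (simp add: algebra_simps)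
        have e2: "inter M (D j) (D j) = 2 * p - 2 - c * a" using D_sq[OF j] kc by (simp add: a_def algebra_simps)
        show ?thesis unfolding e1 e2 by (simp add: algebra_simps)
      qed
    qed
    also have "\<dots> \<le> 0"
    proof (rule sum_nonpos)
      fix l assume "l \<in> {Suc j..<m}"
      then have "D l \<le> D j" "l < m" using D_mono by auto
      then have "D l A - a \<le> 0" by (simp add: a_def le_fun_def)
      moreover have "2 * p - 2 \<ge> 0" using p_ge1 by simp
      ultimately show "(D l A - a) * (2 * p - 2) \<le> 0" by (simp add: mult_nonpos_nonneg)
    qed
    finally show ?thesis .
  qed
  have rest: "(\<Sum>E\<in>UNIV - {A}. t E) \<le> 0"
  proof -
    have "s * (\<Sum>E\<in>UNIV - {A}. t E) = s * inter M (D j) (D j) - a * (s * y')"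
    proof -
      have h: "(\<Sum>E\<in>UNIV - {A}. t E) = inter M (D j) (D j) - a * y'" using tot split tA by simp
      show ?thesis unfolding h by (simp add: algebra_simps)
    qed
    also have "\<dots> \<le> 0" using key Y'sq1 by simp
    finally show ?thesis using s1 by (simp add: mult_le_0_iff)
  qed
  have snn: "(\<Sum>E\<in>UNIV - {A}. t E) \<ge> 0" by (rule sum_nonneg) (use tnn in auto)
  then have s0: "(\<Sum>E\<in>UNIV - {A}. t E) = 0" using rest by simp
  have "\<forall>E\<in>UNIV - {A}. t E = 0"
    using s0 sum_nonneg_eq_0_iff[of "UNIV - {A}" t] tnn by auto
  then have "t E = 0" using Suc.prems by simp
  then show ?case using Suc.prems by (simp add: t_def)
qed

end


lemma inter_lin_left: "inter M (\<lambda>i. a * X i + b * W i) V = a * inter M X V + b * inter M W V"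
  unfolding inter_def by (simp add: algebra_simps sum.distrib sum_distrib_left)

lemma inter_lin_right: "inter M V (\<lambda>i. a * X i + b * W i) = a * inter M V X + b * inter M V W"
  unfolding inter_def by (simp add: algebra_simps sum.distrib sum_distrib_left)

context S begin

definition Y where "Y = sum_list Ds"
definition y where "y = ip Y A"

lemma Y_Yt: "Y = Yt 0" by (simp add: Y_def Yt_def)

lemma YE: "E \<noteq> A \<Longrightarrow> ip Y E = 0"
  using C_main[of 0 E] m_pos Z_ge1[of E] Ds_ne by (simp add: Y_Yt D0)

lemma Ydot: "inter M Y X = X A * y"
proof -
  have "inter M Y X = (\<Sum>E\<in>UNIV. X E * ip Y E)" by (rule inter_expand)
  also have "\<dots> = X A * ip Y A + (\<Sum>E\<in>UNIV - {A}. X E * ip Y E)" by (simp add: sum.remove)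
  also have "(\<Sum>E\<in>UNIV - {A}. X E * ip Y E) = 0" by (rule sum.neutral) (simp add: YE)
  finally show ?thesis by (simp add: y_def)
qed

lemma Ysq: "inter M Y Y = Y A * y" by (rule Ydot)

lemma Ysq2: "inter M Y Y = (\<Sum>l\<in>{0..<m}. inter M (D l) (D l))"
  using Yt_sq[of 0] by (simp add: Y_Yt)

lemma YA: "Y A = (\<Sum>l\<in>{0..<m}. D l A)"
  using Yt_A[of 0] by (simp add: Y_Yt)

lemma Y_ge_Z: "Z \<le> Y"
proof -
  have "Y = D 0 + Yt (Suc 0)" using Yt_Suc[of 0] m_pos Ds_ne by (simp add: Y_Yt)
  moreover have "Yt (Suc 0) \<ge> 0" using Yt_nonneg m_pos by simp
  ultimately show ?thesis by (simp add: D0 le_fun_def)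
qed

lemma YA_pos: "Y A \<ge> 1" using Y_ge_Z A_Z by (simp add: le_fun_def) (smt (verit))

lemma sq_cases: "l < m \<Longrightarrow> D l A = k \<or> (c = 1 \<and> D l A = k - 1)"
proof -
  assume l: "l < m"
  have "D l \<noteq> 0" using D_pos[OF l] by simp
  then have "inter M (D l) (D l) < 0" by (rule negdef)
  then have "c * (k - D l A) < 2" using D_sq[OF l] by simp
  moreover have "k - D l A \<ge> 0" using DA_le[OF l] by simp
  moreover have "c \<ge> 1" using c_pos by simp
  ultimately show ?thesis
  proof (cases "k - D l A = 0")
    case True then show ?thesis by simp
  next
    case False
    then have "k - D l A \<ge> 1" using \<open>k - D l A \<ge> 0\<close> by simp
    then have "c * (k - D l A) \<ge> c * 1" using \<open>c \<ge> 1\<close> by (intro mult_left_mono) auto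
    then have "c = 1" using \<open>c * (k - D l A) < 2\<close> \<open>c \<ge> 1\<close> by linarith
    then have "k - D l A = 1" using \<open>c * (k - D l A) < 2\<close> \<open>k - D l A \<ge> 1\<close> by simp
    then show ?thesis using \<open>c = 1\<close> by simp
  qed
qed

lemma Yt_last: "Yt (m - 1) = Zm"
proof -
  have j: "m - 1 < m" using m_pos by simp
  have "Suc (m - 1) = m" using m_pos by simp
  then show ?thesis using Yt_Suc[OF j] Yt_m Dlast by simp
qed

lemma allk: "p \<ge> 2 \<Longrightarrow> l < m \<Longrightarrow> D l A = k"
proof (rule ccontr)
  assume p2: "p \<ge> 2" and l: "l < m" and ne: "D l A \<noteq> k"
  then have c1: "c = 1" and al: "D l A = k - 1" using sq_cases[OF l] by auto
  have j: "m - 1 < m" using m_pos by simp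
  have "D (m - 1) \<le> D l" using D_mono l by simp
  then have "Zm A \<le> D l A" using Dlast by (simp add: le_fun_def)
  then have "Zm A \<le> k - 1" using al by simp
  moreover have "Zm A = k \<or> Zm A = k - 1" using sq_cases[OF j] Dlast c1 by auto
  ultimately have ZmA': "Zm A = k - 1" by auto
  have sq: "inter M Zm Zm = -1" using D_sq[OF j] Dlast ZmA' c1 by simp
  have "inter M Zm Zm = Zm A * ip Zm A"
  proof -
    have "inter M Zm Zm = (\<Sum>E\<in>UNIV. Zm E * ip Zm E)" by (rule inter_expand)
    also have "\<dots> = Zm A * ip Zm A + (\<Sum>E\<in>UNIV - {A}. Zm E * ip Zm E)" by (simp add: sum.remove)
    also have "(\<Sum>E\<in>UNIV - {A}. Zm E * ip Zm E) = 0"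
    proof (rule sum.neutral, rule ballI)
      fix E assume "E \<in> UNIV - {A}"
      then have EA: "E \<noteq> A" by simp
      show "Zm E * ip Zm E = 0"
      proof (cases "Zm E = 0")
        case False
        then have "Zm E \<ge> 1" using Zm_props by (auto simp: pos_fun_iff) (smt (verit))
        then have "ip (Yt (m - 1)) E = 0" using C_main[OF j EA] Dlast by simp
        then show ?thesis using Yt_last by simp
      qed simp
    qed
    finally show ?thesis by simp
  qed
  then have "(k - 1) * (- ip Zm A) = 1" using sq ZmA' by simp
  moreover have "k - 1 > 0" using ZmA ZmA' by simp
  ultimately have "k - 1 = 1" using pos_zmult_eq_1_iff by blast
  then have "k = 2" by simp
  then have "p = 1" using kc c1 by simp
  then show False using p2 by simp
qed

lemma cY: "c * Y A = - p * inter M Y Y"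
proof -
  have "c * Y A + p * inter M Y Y = (\<Sum>l\<in>{0..<m}. c * D l A + p * inter M (D l) (D l))"
    by (simp add: YA Ysq2 sum_distrib_left sum.distrib)
  also have "\<dots> = 0"
  proof (rule sum.neutral, rule ballI)
    fix l assume "l \<in> {0..<m}"
    then have l: "l < m" by simp
    have e: "inter M (D l) (D l) = 2 * p - 2 - c * D l A" using D_sq[OF l] kc by (simp add: algebra_simps)
    show "c * D l A + p * inter M (D l) (D l) = 0"
    proof (cases "p \<ge> 2")
      case True
      then have "D l A = k" using allk l by simp
      then show ?thesis using e kc by (simp add: algebra_simps)
    next
      case False
      then have "p = 1" using p_ge1 by simp
      then show ?thesis using e by simp
    qed
  qed
  finally show ?thesis by simp
qed

lemma c_eq: "c = - p * y"
proof -
  have "c * Y A = (- p * y) * Y A" using cY Ysq by (simp add: algebra_simps)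
  then have "(c + p * y) * Y A = 0" by (simp add: algebra_simps)
  then show ?thesis using YA_pos by simp
qed

lemma y_neg: "y < 0"
proof -
  have "- p * y > 0" using c_eq c_pos by simp
  then show ?thesis using p_ge1 mult_nonneg_nonneg[of p y] by linarith
qed

lemma Ysq_m: "p \<ge> 2 \<Longrightarrow> inter M Y Y = - 2 * int m"
proof -
  assume p2: "p \<ge> 2"
  have "inter M Y Y = (\<Sum>l\<in>{0..<m}. -2)"
    unfolding Ysq2
  proof (rule sum.cong[OF refl])
    fix l assume "l \<in> {0..<m}"
    then have l: "l < m" by simp
    show "inter M (D l) (D l) = -2" using D_sq[OF l] allk[OF p2 l] by simp
  qed
  then show ?thesis by simp
qed

lemma YA_m: "p \<ge> 2 \<Longrightarrow> Y A = k * int m"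
proof -
  assume p2: "p \<ge> 2"
  have "Y A = (\<Sum>l\<in>{0..<m}. k)"
    unfolding YA by (rule sum.cong[OF refl]) (use allk[OF p2] in auto)
  then show ?thesis by simp
qed

lemma ky: "p \<ge> 2 \<Longrightarrow> k * y = -2"
proof -
  assume p2: "p \<ge> 2"
  have "- 2 * int m = k * int m * y" using Ysq Ysq_m[OF p2] YA_m[OF p2] by simp
  then have "(k * y + 2) * int m = 0" by (simp add: algebra_simps)
  moreover have "int m \<noteq> 0" using Ds_ne by simp
  ultimately show ?thesis by simp
qed

lemma F_Y: "F X = inter M X X - p * inter M Y X"
  by (simp add: F_def2 Ydot c_eq algebra_simps)

definition hh where "hh X = inter M X X - inter M Y X"

lemma hh_le_Z:
  assumes "0 < U" "U \<le> Z"
  shows "hh U \<le> 0"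
proof -
  have FU: "F U \<le> 2 * p - 2" using ascent[OF assms] FZ by simp
  have FU': "F U = inter M U U - p * (U A * y)" using F_Y Ydot by simp
  have hU: "hh U = inter M U U - U A * y" by (simp add: hh_def Ydot)
  have Une: "U \<noteq> 0" using assms(1) by simp
  have UU: "inter M U U < 0" using negdef[OF Une] .
  have UA0: "U A \<ge> 0" using assms(1) by (simp add: pos_fun_iff)
  have UAk: "U A \<le> k" using assms(2) by (simp add: le_fun_def)
  show ?thesis
  proof (cases "p \<ge> 2")
    case False
    then have "p = 1" using p_ge1 by simp
    then show ?thesis using FU FU' hU by simp
  next
    case True
    have kyv: "k * y = -2" using ky[OF True] .
    show ?thesis
    proof (cases "U A = k")
      case True
      have "hh U = F U + (p - 1) * (U A * y)" using FU' hU by (simp add: algebra_simps)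
      also have "\<dots> \<le> 2 * p - 2 + (p - 1) * (-2)" using FU True kyv by simp
      finally show ?thesis by simp
    next
      case False
      then have lt: "U A < k" using UAk by simp
      show ?thesis
      proof (cases "U A = 0")
        case True then show ?thesis using hU UU by simp
      next
        case False
        then have UA1: "U A \<ge> 1" using UA0 by simp
        then have k2: "k \<ge> 2" using lt by simp
        have "y \<le> -1" using y_neg by simp
        then have "k * y \<le> k * (-1)" using k2 by (intro mult_left_mono) auto
        then have "k \<le> 2" using kyv by simp
        then have "k = 2" using k2 by simp
        then have "y = -1" "U A = 1" using kyv lt UA1 by auto
        then show ?thesis using hU UU by simp
      qed
    qed
  qed
qed

lemma hh_nonneg_arg:
  assumes "X \<ge> 0"
  shows "hh X \<le> 0"
  using assms
proof (induction "nat (\<Sum>i\<in>UNIV. X i)" arbitrary: X rule: less_induct)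
  case less
  show ?case
  proof (cases "X = 0")
    case True then show ?thesis by (simp add: hh_def)
  next
    case False
    then obtain i where Xi: "X i \<noteq> 0" by (auto simp: fun_eq_iff zero_fun_def)
    have X0: "\<And>j. X j \<ge> 0" using less.prems by (simp add: le_fun_def)
    define U where "U = (\<lambda>j. min (X j) (Z j))"
    define W where "W = X - U"
    have Unn: "U \<ge> 0" using X0 Z_ge1 by (auto simp: U_def le_fun_def) (smt (verit))
    have Ui: "U i \<ge> 1" using Xi X0[of i] Z_ge1[of i] by (simp add: U_def)
    have Upos: "0 < U" by (rule pos_of[OF Unn Ui])
    have UZ: "U \<le> Z" by (simp add: U_def le_fun_def)
    have Wnn: "W \<ge> 0" by (simp add: W_def U_def le_fun_def)
    have XUW: "X = U + W" by (simp add: W_def)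
    have UW: "inter M U W \<le> 0"
    proof -
      have "inter M U W = (\<Sum>E\<in>UNIV. W E * ip U E)" by (rule inter_expand)
      also have "\<dots> \<le> 0"
      proof (rule sum_nonpos)
        fix E
        show "W E * ip U E \<le> 0"
        proof (cases "W E = 0")
          case False
          then have WE: "W E > 0" using Wnn by (simp add: le_fun_def) (smt (verit))
          then have UE: "U E = Z E" by (simp add: W_def U_def)
          have ZU0: "Z - U \<ge> 0" using UZ by (simp add: le_fun_def)
          have "(Z - U) E = 0" using UE by simp
          then have "ip (Z - U) E \<ge> 0" using ip_out ZU0 by blast
          then have "ip U E \<le> ip Z E" by (simp add: inter_diff_left)
          then have "ip U E \<le> 0" using Z_nef[of E] by simp
          then show ?thesis using WE by (simp add: mult_nonneg_nonpos)
        qed simp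
      qed
      finally show ?thesis .
    qed
    have hsplit: "hh X = hh U + hh W + 2 * inter M U W"
      unfolding XUW hh_def by (simp add: inter_add_left inter_add_right isym[of W U] algebra_simps)
    have sumU: "(\<Sum>j\<in>UNIV. U j) \<ge> 1"
    proof -
      have "(\<Sum>j\<in>UNIV. U j) \<ge> (\<Sum>j\<in>{i}. U j)"
        by (rule sum_mono2) (use Unn in \<open>auto simp: le_fun_def\<close>)
      then show ?thesis using Ui by simp
    qed
    have "(\<Sum>j\<in>UNIV. W j) = (\<Sum>j\<in>UNIV. X j) - (\<Sum>j\<in>UNIV. U j)"
      by (simp add: W_def sum_subtractf)
    moreover have "(\<Sum>j\<in>UNIV. W j) \<ge> 0" using Wnn by (intro sum_nonneg) (simp add: le_fun_def)
    ultimately have "nat (\<Sum>j\<in>UNIV. W j) < nat (\<Sum>j\<in>UNIV. X j)" using sumU by simp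
    then have hW: "hh W \<le> 0" using less.hyps Wnn by blast
    have hU: "hh U \<le> 0" by (rule hh_le_Z[OF Upos UZ])
    show ?thesis using hsplit hW hU UW by simp
  qed
qed

lemma hh_le0: "hh X \<le> 0"
proof -
  define Xp where "Xp = (\<lambda>i. max (X i) 0)"
  define Xn where "Xn = (\<lambda>i. max (- X i) 0)"
  have XX: "X = Xp - Xn" by (auto simp: Xp_def Xn_def fun_eq_iff)
  have Xp0: "Xp \<ge> 0" by (simp add: Xp_def le_fun_def)
  have Xn0: "Xn \<ge> 0" by (simp add: Xn_def le_fun_def)
  have c1: "inter M Xp Xn \<ge> 0"
  proof -
    have "inter M Xp Xn = (\<Sum>E\<in>UNIV. Xn E * ip Xp E)" by (rule inter_expand)
    also have "\<dots> \<ge> 0"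
    proof (rule sum_nonneg)
      fix E
      show "0 \<le> Xn E * ip Xp E"
      proof (cases "Xn E = 0")
        case False
        then have "Xp E = 0" by (simp add: Xn_def Xp_def) 
        then have "ip Xp E \<ge> 0" using ip_out Xp0 by blast
        moreover have "Xn E \<ge> 0" using Xn0 by (simp add: le_fun_def)
        ultimately show ?thesis by simp
      qed simp
    qed
    finally show ?thesis .
  qed
  have c2: "inter M Xn Xn \<le> 0"
    using negdef[of Xn] by (cases "Xn = 0") auto
  have c3: "inter M Y Xn \<le> 0"
    using Ydot y_neg Xn0 by (simp add: le_fun_def mult_nonneg_nonpos)
  have "hh X = hh Xp - 2 * inter M Xp Xn + inter M Xn Xn + inter M Y Xn"
    unfolding XX hh_def by (simp add: inter_diff_left inter_diff_right isym[of Xn Xp] algebra_simps)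
  also have "\<dots> \<le> hh Xp" using c1 c2 c3 by simp
  also have "hh Xp \<le> 0" by (rule hh_nonneg_arg[OF Xp0])
  finally show ?thesis .
qed

end


lemma arith_final:
  fixes p :: int
  assumes "p \<ge> 1"
  defines "q \<equiv> (p - 1) div 2"
  shows "(p + 1) div 2 = q + 1" and "(p - 1 - q) * ((p + 1) div 2) = p ^ 2 div 4"
proof -
  have "(\<exists>r. p = 2 * r) \<or> (\<exists>r. p = 2 * r + 1)" by presburger
  then have "(p + 1) div 2 = q + 1 \<and> (p - 1 - q) * ((p + 1) div 2) = p ^ 2 div 4"
  proof
    assume "\<exists>r. p = 2 * r"
    then obtain r where r: "p = 2 * r" by blast
    have q: "q = r - 1" unfolding q_def r by presburger
    have "p ^ 2 div 4 = r * r" unfolding r by (simp add: power2_eq_square)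
    moreover have "(p + 1) div 2 = r" unfolding r by presburger
    ultimately show ?thesis using q r by simp
  next
    assume "\<exists>r. p = 2 * r + 1"
    then obtain r where r: "p = 2 * r + 1" by blast
    have q: "q = r" unfolding q_def r by presburger
    have "p ^ 2 = 4 * (r * r + r) + 1" unfolding r by (simp add: power2_eq_square algebra_simps)
    then have "p ^ 2 div 4 = r * r + r" by presburger
    moreover have "(p + 1) div 2 = r + 1" unfolding r by presburger
    ultimately show ?thesis using q r by (simp add: algebra_simps)
  qed
  then show "(p + 1) div 2 = q + 1" and "(p - 1 - q) * ((p + 1) div 2) = p ^ 2 div 4" by auto
qed

context S begin

definition qq where "qq = (p - 1) div 2"
abbreviation nn where "nn \<equiv> qq + 1"

lemma qq_nonneg: "qq \<ge> 0" using p_ge1 by (simp add: qq_def)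

lemma Y_nonneg: "Y \<ge> 0" using Yt_nonneg[of 0] by (simp add: Y_Yt)

lemma F_bound:
  assumes "0 < X"
  shows "F X \<le> 2 * int m * nn * (p - nn)"
proof -
  have FX: "F X = inter M X X - p * inter M Y X" by (rule F_Y)
  have "(\<exists>r. p = 2 * r) \<or> (\<exists>r. p = 2 * r + 1)" by presburger
  then show ?thesis
  proof
    assume "\<exists>r. p = 2 * r"
    then obtain r where r: "p = 2 * r" by blast
    have r1: "r \<ge> 1" using p_ge1 r by simp
    have nr: "nn = r" unfolding qq_def r by presburger
    have p2: "p \<ge> 2" using r r1 by simp
    define V where "V = (\<lambda>i. 2 * X i + (- p) * Y i)"
    have "inter M V V \<le> 0" using negdef[of V] by (cases "V = 0") auto
    moreover have "inter M V V = 4 * inter M X X - 4 * p * inter M Y X + p * p * inter M Y Y"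
      unfolding V_def inter_lin_left inter_lin_right by (simp add: isym[of X Y] algebra_simps)
    ultimately have "4 * F X \<le> - p * p * inter M Y Y" using FX by (simp add: algebra_simps)
    also have "\<dots> = 8 * int m * r * r" using Ysq_m[OF p2] r by (simp add: algebra_simps)
    finally have "4 * F X \<le> 4 * (2 * int m * r * r)" by (simp add: algebra_simps)
    then have "F X \<le> 2 * int m * r * r" by linarith
    then show ?thesis using nr r by (simp add: algebra_simps)
  next
    assume "\<exists>r. p = 2 * r + 1"
    then obtain r where r: "p = 2 * r + 1" by blast
    have q: "qq = r" unfolding qq_def r by presburger
    have r0: "r \<ge> 0" using qq_nonneg q by simp
    define W where "W = (\<lambda>i. 1 * X i + (- r) * Y i)"
    have hW: "hh W \<le> 0" by (rule hh_le0)
    have "hh W = inter M X X - (2 * r + 1) * inter M Y X + (r * r + r) * inter M Y Y"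
      unfolding W_def hh_def inter_lin_left inter_lin_right by (simp add: isym[of X Y] algebra_simps)
    then have FXW: "F X = hh W - (r * r + r) * inter M Y Y" using FX r by simp
    show ?thesis
    proof (cases "r = 0")
      case True
      then show ?thesis using FXW hW q r by simp
    next
      case False
      then have "p \<ge> 2" using r r0 by simp
      then have "F X = hh W + 2 * int m * (r * r + r)" using FXW Ysq_m by simp
      then have "F X \<le> 2 * int m * (r * r + r)" using hW by simp
      then show ?thesis using q r by (simp add: algebra_simps)
    qed
  qed
qed

lemma F_nY: "F (\<lambda>i. nn * Y i) = 2 * int m * nn * (p - nn)"
proof -
  have "F (\<lambda>i. nn * Y i) = nn * nn * inter M Y Y - p * nn * inter M Y Y"
    unfolding F_Y inter_scale_left inter_scale_right by (simp add: algebra_simps)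
  also have "\<dots> = 2 * int m * nn * (p - nn)"
  proof (cases "p \<ge> 2")
    case True then show ?thesis using Ysq_m by (simp add: algebra_simps)
  next
    case False
    then have "p = 1" using p_ge1 by simp
    then have "nn = 1" by (simp add: qq_def)
    then show ?thesis using \<open>p = 1\<close> by simp
  qed
  finally show ?thesis .
qed

lemma pa_nY: "pa M g (\<lambda>i. nn * Y i) = int m * nn * (p - nn) + 1"
  using F_nY by (simp add: pa_FF)

lemma nY_pos: "0 < (\<lambda>i. nn * Y i)"
proof (rule pos_of)
  show "0 \<le> (\<lambda>i. nn * Y i)" using Y_nonneg qq_nonneg by (auto simp: le_fun_def)
  have "nn * Y A \<ge> 1 * 1" using YA_pos qq_nonneg by (intro mult_mono) auto
  then show "1 \<le> nn * Y A" by simp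
qed

lemma pa_bound: "0 < X \<Longrightarrow> pa M g X \<le> int m * nn * (p - nn) + 1"
proof -
  assume X: "0 < X"
  have "F X div 2 \<le> (2 * (int m * nn * (p - nn))) div 2"
    using F_bound[OF X] by (intro zdiv_mono1) (auto simp: algebra_simps)
  then show ?thesis by (simp add: pa_FF)
qed

lemma pa_sing_eq: "pa_sing M g = int m * nn * (p - nn) + 1"
  unfolding pa_sing_def
proof (rule Greatest_equality)
  show "\<exists>D. 0 < D \<and> int m * nn * (p - nn) + 1 = pa M g D"
    using nY_pos pa_nY by metis
next
  fix x assume "\<exists>D. 0 < D \<and> x = pa M g D"
  then show "x \<le> int m * nn * (p - nn) + 1" using pa_bound by blast
qed

lemma main:
  "let p = pa M g Z; m = int (length Ds); Y = sum_list Ds; q = (p - 1) div 2 in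
      pa_sing M g = pa M g (\<lambda>i. (q + 1) * Y i) \<and>
      pa M g (\<lambda>i. (q + 1) * Y i) = m * (p - 1 - q) * ((p + 1) div 2) + 1 \<and>
      m * (p - 1 - q) * ((p + 1) div 2) + 1 = (p ^ 2 div 4) * m + 1"
proof -
  have a1: "(p + 1) div 2 = qq + 1" using arith_final(1)[OF p_ge1] by (simp add: qq_def)
  have a2: "(p - 1 - qq) * ((p + 1) div 2) = p ^ 2 div 4" using arith_final(2)[OF p_ge1] by (simp add: qq_def)
  have e1: "pa_sing M g = pa M g (\<lambda>i. nn * Y i)" using pa_sing_eq pa_nY by simp
  have e2: "pa M g (\<lambda>i. nn * Y i) = int m * (p - 1 - qq) * ((p + 1) div 2) + 1"
    using pa_nY a1 by (simp add: algebra_simps)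
  have e3: "int m * (p - 1 - qq) * ((p + 1) div 2) + 1 = (p ^ 2 div 4) * int m + 1"
    using a2 by (simp add: algebra_simps)
  show ?thesis using e1 e2 e3 a2 unfolding Let_def Y_def qq_def by (simp add: eq_commute[of "p\<^sup>2 div 4"])
qed

end


theorem theorem3p13:
  fixes M :: "'e::finite \<Rightarrow> 'e \<Rightarrow> int" and g :: "'e \<Rightarrow> int"
    and Z Zm :: "'e \<Rightarrow> int" and Ds :: "('e \<Rightarrow> int) list"
  assumes "resolution_data M g"
    and "fund_cycle_on M UNIV Z"
    and "inter M Z Z = -2"
    and "pa M g Z > 0"
    and "ess_irreducible M g Z"
    and "is_Zmin M g Z Zm"
    and "yau_seq M g Z Zm Ds"
    and "last Ds = Zm"
  shows "let p = pa M g Z; m = int (length Ds); Y = sum_list Ds; q = (p - 1) div 2 in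
      pa_sing M g = pa M g (\<lambda>i. (q + 1) * Y i) \<and>
      pa M g (\<lambda>i. (q + 1) * Y i) = m * (p - 1 - q) * ((p + 1) div 2) + 1 \<and>
      m * (p - 1 - q) * ((p + 1) div 2) + 1 = (p ^ 2 div 4) * m + 1"
proof -
  obtain A where A1: "Z A \<ge> 1" and A2: "\<not> minus_two_curve M g A"
    and R: "Z - (\<lambda>j. Z A * unitc A j) = 0 \<or> (\<forall>E\<in>supp (Z - (\<lambda>j. Z A * unitc A j)). minus_two_curve M g E)"
    using assms(5) unfolding ess_irreducible_def Let_def by blast
  have Zge1: "Z i \<ge> 1" for i
  proof -
    have "fund_cand M UNIV Z" using assms(2) by (simp add: fund_cycle_on_def)
    then have "0 < Z" "supp Z = UNIV" by (auto simp: fund_cand_def)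
    then have "Z i \<ge> 0" "Z i \<noteq> 0" by (auto simp: pos_fun_iff supp_def)
    then show ?thesis by simp
  qed
  have others: "minus_two_curve M g E" if EA: "E \<noteq> A" for E
  proof -
    have RE: "(Z - (\<lambda>j. Z A * unitc A j)) E = Z E" using EA by (simp add: unitc_def)
    then have "(Z - (\<lambda>j. Z A * unitc A j)) E \<noteq> 0" using Zge1[of E] by linarith
    then have "Z - (\<lambda>j. Z A * unitc A j) \<noteq> 0"
      by (metis zero_fun_def)
    moreover have "unitc A E = 0" using EA by (simp add: unitc_def)
    then have "E \<in> supp (Z - (\<lambda>j. Z A * unitc A j))" using Zge1[of E] unfolding supp_def by simp
    ultimately show ?thesis using R by blast
  qed
  interpret S M g Z Zm Ds A
    by (unfold_locales) (use assms A1 A2 others in auto)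
  show ?thesis by (rule main)
qed

end
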